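(* Let $n$ be a positive integer. (1) For $q>2$, $$\tilde\psi^{(n)}(q)=\frac12(-1)^{n+1}(n-1)!\left(\frac1{(q-2)^n}-\frac1{(q-1)^n}\right)+(-1)^n\sum_{k=1}^\infty\frac{2^k(n+k)!}{(k+1)!}\,\zeta_E(n+k+1,q).$$ (2) For $q>1$, $$\tilde\psi^{(n)}(q)=\frac12(-1)^{n+1}(n-1)!\left(\frac1{(q-1)^n}-\frac1{q^n}\right)+(-1)^n\sum_{k=1}^\infty\frac{(n+2k)!}{(2k+1)!}\,\zeta_E(n+2k+1,q).$$
   Context: For $q>0$, $\zeta_E(z,q)=\sum_{n=0}^\infty (-1)^n (n+q)^{-z}$ for $\mathrm{Re}(z)>0$, extended by analytic continuation to an entire function of $z$. The modified digamma function is $\tilde\psi(q):=-\zeta_E(1,q)=-\sum_{n\ge0}\frac{(-1)^n}{n+q}$ for $q>0$, and $\tilde\psi^{(n)}$ denotes its $n$-th derivative in $q$. *)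

theory Defs
  imports "HOL-Analysis.Analysis"
begin

text \<open>Alternating Hurwitz zeta function for real argument z > 0 and q > 0,
  given by its defining (convergent) series. Only used here at z \<ge> 1.\<close>
definition zeta_E :: "real \<Rightarrow> real \<Rightarrow> real" where
  "zeta_E z q = (\<Sum>m. (-1) ^ m / (real m + q) powr z)"

definition psi_tilde :: "real \<Rightarrow> real" where
  "psi_tilde q = - zeta_E 1 q"

end

theory Submission imports Defs "HOL-Real_Asymp.Real_Asymp" begin

lemma zeta_nat:
  assumes "q > 0"
  shows "zeta_E (real k) q = (\<Sum>m. (-1) ^ m / (real m + q) ^ k)"
proof -
  have "\<And>m. (real m + q) powr real k = (real m + q) ^ k"
    using assms by (intro powr_realpow) auto
  then show ?thesis unfolding zeta_E_def by simp
qed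

lemma alt_summable:
  assumes "r > 0" "k \<ge> 1"
  shows "summable (\<lambda>m. (-1) ^ m / (real m + r) ^ k :: real)"
proof -
  have "summable (\<lambda>m. (-1) ^ m * (1 / (real m + r) ^ k))"
  proof (rule summable_Leibniz'(1))
    have "(\<lambda>m. 1 / (real m + r)) \<longlonglongrightarrow> 0"
      using assms by real_asymp
    then have "(\<lambda>m. (1 / (real m + r)) ^ k) \<longlonglongrightarrow> 0 ^ k"
      by (intro tendsto_power)
    then show "(\<lambda>m. 1 / (real m + r) ^ k) \<longlonglongrightarrow> 0"
      using assms by (simp add: power_one_over power_0_left)
    show "\<And>n. 0 \<le> 1 / (real n + r) ^ k" using assms by simp
    show "\<And>n. 1 / (real (Suc n) + r) ^ k \<le> 1 / (real n + r) ^ k"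
      using assms by (intro divide_left_mono power_mono mult_pos_pos) auto
  qed
  then show ?thesis by simp
qed

lemma abs_summable_pow:
  assumes "r > 0" "k \<ge> 2"
  shows "summable (\<lambda>m. 1 / (real m + r) ^ k :: real)"
proof (rule summable_comparison_test')
  show "summable (\<lambda>m. inverse (real m ^ k))"
    using assms by (intro inverse_power_summable) auto
  show "norm (1 / (real m + r) ^ k) \<le> inverse (real m ^ k)" if "m \<ge> 1" for m
    using assms that by (simp add: divide_simps power_mono)
qed

lemma pow_aux:
  assumes y: "(y::real) > 0"
  shows "(-1::real) ^ m * - (c * (1 * y ^ j) * inverse ((y ^ Suc j) ^ Suc (Suc 0)))
        = - c * (-1) ^ m / y ^ Suc (Suc j)"
proof -
  have e: "(y ^ Suc j) ^ Suc (Suc 0) = y ^ j * y ^ Suc (Suc j)"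
    by (simp add: ac_simps)
  have "y ^ j * inverse (y ^ j * y ^ Suc (Suc j)) = inverse (y ^ Suc (Suc j))"
    using y by (simp add: inverse_mult_distrib)
  then show ?thesis unfolding e using y by (simp add: divide_inverse mult_ac)
qed

lemma zeta_deriv:
  assumes "q > 0" "k \<ge> 1"
  shows "((\<lambda>x. \<Sum>m. (-1) ^ m / (real m + x) ^ k) has_real_derivative
          (\<Sum>m. - real k * (-1) ^ m / (real m + q) ^ Suc k)) (at q)"
proof (rule has_field_derivative_series'(2)[where S = "{q/2<..}" and x0 = q])
  show "convex {q/2<..}" by simp
  show "q \<in> {q/2<..}" using assms by simp
  show "q \<in> interior {q/2<..}" using assms by (simp add: interior_open)
  show "summable (\<lambda>m. (-1) ^ m / (real m + q) ^ k)" using assms by (intro alt_summable)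
  show "((\<lambda>x. (-1) ^ m / (real m + x) ^ k) has_field_derivative
          - real k * (-1) ^ m / (real m + x) ^ Suc k) (at x within {q/2<..})"
    if "x \<in> {q/2<..}" for m x
  proof -
    have x: "real m + x > 0" using that assms by simp
    have d1: "((\<lambda>x. real m + x) has_field_derivative 1) (at x within {q/2<..})"
      using DERIV_add[OF DERIV_const DERIV_ident, of "real m" x "{q/2<..}"] by simp
    have d2: "((\<lambda>x. (real m + x) ^ k) has_field_derivative real k * (1 * (real m + x) ^ (k - Suc 0))) (at x within {q/2<..})"
      by (rule DERIV_power[OF d1])
    have d3: "((\<lambda>x. inverse ((real m + x) ^ k)) has_field_derivative
        - (real k * (1 * (real m + x) ^ (k - Suc 0)) * inverse (((real m + x) ^ k) ^ Suc (Suc 0)))) (at x within {q/2<..})"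
      using x by (intro DERIV_inverse_fun[OF d2]) auto
    have d4: "((\<lambda>x. (-1) ^ m * inverse ((real m + x) ^ k)) has_field_derivative
        (-1) ^ m * - (real k * (1 * (real m + x) ^ (k - Suc 0)) * inverse (((real m + x) ^ k) ^ Suc (Suc 0)))) (at x within {q/2<..})"
      by (rule DERIV_cmult[OF d3])
    moreover have eq: "(-1) ^ m * - (real k * (1 * (real m + x) ^ (k - Suc 0)) * inverse (((real m + x) ^ k) ^ Suc (Suc 0)))
        = - real k * (-1) ^ m / (real m + x) ^ Suc k"
    proof -
      obtain j where j: "k = Suc j" using assms by (cases k) auto
      show ?thesis using pow_aux[of "real m + x" m "real k" j] x unfolding j by simp
    qed
    have "((\<lambda>x. (-1) ^ m * inverse ((real m + x) ^ k)) has_field_derivative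
        - real k * (-1) ^ m / (real m + x) ^ Suc k) (at x within {q/2<..})"
      using d4 unfolding eq .
    then show ?thesis by (simp only: divide_inverse)
  qed
  show "uniformly_convergent_on {q/2<..}
          (\<lambda>n x. \<Sum>i<n. - real k * (-1) ^ i / (real i + x) ^ Suc k)"
  proof (rule Weierstrass_m_test')
    show "summable (\<lambda>m. real k * (1 / (real m + q/2) ^ Suc k))"
      using assms by (intro summable_mult abs_summable_pow) auto
    show "norm (- real k * (-1) ^ m / (real m + x) ^ Suc k) \<le> real k * (1 / (real m + q/2) ^ Suc k)"
      if "x \<in> {q/2<..}" for m x
      proof -
      have x: "real m + x > real m + q/2" "real m + q/2 > 0" using that assms by auto
      have "1 / (real m + x) ^ Suc k \<le> 1 / (real m + q/2) ^ Suc k"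
        using x by (intro divide_left_mono power_mono mult_pos_pos) auto
      then have "real k * (1 / (real m + x) ^ Suc k) \<le> real k * (1 / (real m + q/2) ^ Suc k)"
        by (rule mult_left_mono) simp
      then show ?thesis using x by (simp add: norm_divide abs_mult power_abs)
    qed
  qed
qed

lemma psi_derivs:
  "\<forall>q>0. (deriv ^^ n) psi_tilde q = (-1) ^ (n+1) * fact n * zeta_E (real (n+1)) q"
proof (induction n)
  case 0
  then show ?case by (simp add: psi_tilde_def)
next
  case (Suc n)
  show ?case
  proof (intro allI impI)
    fix q :: real assume q: "q > 0"
    define c :: real where "c = (-1) ^ (n+1) * fact n"
    define g where "g = (\<lambda>x. c * (\<Sum>m. (-1) ^ m / (real m + x) ^ (n+1)))"
    have eqg: "(deriv ^^ n) psi_tilde x = g x" if "x \<in> {0<..}" for x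
    proof -
      have "zeta_E (real (n+1)) x = (\<Sum>m. (-1) ^ m / (real m + x) ^ (n+1))"
        using that by (intro zeta_nat) simp
      then show ?thesis using Suc.IH that unfolding g_def c_def by simp
    qed
    have "(g has_real_derivative c * (\<Sum>m. - real (n+1) * (-1) ^ m / (real m + q) ^ Suc (n+1))) (at q)"
      unfolding g_def by (intro DERIV_cmult zeta_deriv q) simp
    then have "((deriv ^^ n) psi_tilde has_real_derivative
        c * (\<Sum>m. - real (n+1) * (-1) ^ m / (real m + q) ^ Suc (n+1))) (at q)"
      by (rule has_field_derivative_transform_within_open[where S="{0<..}"]) (use q eqg in auto)
    then have "(deriv ^^ Suc n) psi_tilde q = c * (\<Sum>m. - real (n+1) * (-1) ^ m / (real m + q) ^ Suc (n+1))"
      by (simp add: DERIV_imp_deriv)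
    also have "(\<Sum>m. - real (n+1) * (-1) ^ m / (real m + q) ^ Suc (n+1))
        = - real (n+1) * (\<Sum>m. (-1) ^ m / (real m + q) ^ Suc (n+1))"
    proof -
      have "summable (\<lambda>m. (-1) ^ m / (real m + q) ^ Suc (n+1) :: real)"
        using q by (intro alt_summable) auto
      then show ?thesis by (subst suminf_mult[symmetric]) auto
    qed
    also have "(\<Sum>m. (-1) ^ m / (real m + q) ^ Suc (n+1)) = zeta_E (real (Suc n + 1)) q"
      using zeta_nat[OF q, of "Suc n + 1"] by simp
    finally show "(deriv ^^ Suc n) psi_tilde q = (-1) ^ (Suc n + 1) * fact (Suc n) * zeta_E (real (Suc n + 1)) q"
      unfolding c_def by (simp add: algebra_simps)
  qed
qed

lemma fubini_sums:
  fixes G :: "nat \<Rightarrow> nat \<Rightarrow> real"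
  assumes A: "\<And>m. (\<lambda>j. \<bar>G m j\<bar>) sums A m" and sA: "summable A"
  shows "(\<lambda>j. \<Sum>m. G m j) sums (\<Sum>m. \<Sum>j. G m j)"
proof -
  have Apos: "A m \<ge> 0" for m
    using A[of m] by (metis abs_ge_zero sums_iff suminf_nonneg)
  have rowabs: "(\<lambda>j. norm (G m j)) summable_on UNIV" for m
    using sums_nonneg_imp_has_sum[OF A[of m]] by (auto simp: summable_on_def)
  have rowinf: "infsum (\<lambda>j. norm (G m j)) UNIV = A m" for m
    using sums_nonneg_imp_has_sum[OF A[of m]] by (simp add: infsumI)
  have Ahas: "(A has_sum suminf A) UNIV"
    using sums_nonneg_imp_has_sum[of A] sA Apos by (simp add: summable_sums)
  have abs: "(\<lambda>x. norm ((\<lambda>(m,j). G m j) x)) summable_on UNIV \<times> UNIV"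
  proof -
    have "(\<lambda>p. norm (G (fst p) (snd p))) summable_on Sigma UNIV (\<lambda>_. UNIV)"
    proof (subst Infinite_Sum.abs_summable_on_Sigma_iff, intro conjI ballI)
      show "(\<lambda>j. norm (G (fst (m, j)) (snd (m, j)))) summable_on UNIV" for m using rowabs[of m] by simp
      have "(\<lambda>m. norm (A m)) summable_on UNIV"
        using Ahas Apos by (auto simp: summable_on_def)
      then show "(\<lambda>m. norm (infsum (\<lambda>j. norm (G (fst (m, j)) (snd (m, j)))) UNIV)) summable_on UNIV"
        using rowinf by simp
    qed
    then show ?thesis by (simp add: case_prod_beta)
  qed
  have summ: "(\<lambda>(m,j). G m j) summable_on UNIV \<times> UNIV"
    by (rule abs_summable_summable[OF abs])
  have abs2: "(\<lambda>x. norm ((\<lambda>(j,m). G m j) x)) summable_on UNIV \<times> UNIV"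
    using abs summable_on_swap[of "\<lambda>(m,j). norm (G m j)" UNIV UNIV]
    by (simp add: case_prod_unfold)
  have summ2: "(\<lambda>(j,m). G m j) summable_on UNIV \<times> UNIV"
    by (rule abs_summable_summable[OF abs2])
  have colabs: "(\<lambda>m. norm (G m j)) summable_on UNIV" for j
  proof -
    have "(\<lambda>p. norm (G (snd p) (fst p))) summable_on Sigma UNIV (\<lambda>_. UNIV)"
      using abs2 by (simp add: case_prod_beta)
    then show ?thesis by (subst (asm) Infinite_Sum.abs_summable_on_Sigma_iff) auto
  qed
  have nat_sums: "f sums infsum f UNIV" if "(\<lambda>x. norm (f x)) summable_on UNIV" for f :: "nat \<Rightarrow> real"
  proof -
    have "f summable_on UNIV" using abs_summable_summable[OF that] .
    then show ?thesis by (intro has_sum_imp_sums has_sum_infsum)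
  qed
  have row_eq: "infsum (\<lambda>j. G m j) UNIV = (\<Sum>j. G m j)" for m
    using nat_sums[OF rowabs[of m]] by (simp add: sums_iff)
  have col_eq: "infsum (\<lambda>m. G m j) UNIV = (\<Sum>m. G m j)" for j
    using nat_sums[OF colabs[of j]] by (simp add: sums_iff)
  have "(\<lambda>m. infsum (\<lambda>j. G m j) UNIV) summable_on UNIV"
    using summable_on_Sigma_banach[of "\<lambda>m j. G m j" UNIV "\<lambda>_. UNIV"] summ by simp
  then have r: "(\<lambda>m. \<Sum>j. G m j) sums infsum (\<lambda>m. infsum (\<lambda>j. G m j) UNIV) UNIV"
    using row_eq by (intro has_sum_imp_sums) (simp add: has_sum_infsum)
  have "(\<lambda>j. infsum (\<lambda>m. G m j) UNIV) summable_on UNIV"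
    using summable_on_Sigma_banach[of "\<lambda>j m. G m j" UNIV "\<lambda>_. UNIV"] summ2 by simp
  then have c: "(\<lambda>j. \<Sum>m. G m j) sums infsum (\<lambda>j. infsum (\<lambda>m. G m j) UNIV) UNIV"
    using col_eq by (intro has_sum_imp_sums) (simp add: has_sum_infsum)
  have sw: "infsum (\<lambda>m. infsum (\<lambda>j. G m j) UNIV) UNIV = infsum (\<lambda>j. infsum (\<lambda>m. G m j) UNIV) UNIV"
    using infsum_swap_banach[of "\<lambda>m j. G m j" UNIV UNIV] summ by simp
  show ?thesis using r c sw by (simp add: sums_iff)
qed

lemma main_gen:
  fixes c :: "nat \<Rightarrow> real" and e :: "nat \<Rightarrow> nat" and F :: "nat \<Rightarrow> real"
  assumes q: "q > 0" and e: "\<And>j. e j \<ge> 1" and c: "\<And>j. c j \<ge> 0"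
    and rows: "\<And>m. (\<lambda>j. c j / (real m + q) ^ (e j)) sums F m"
    and sF: "summable F"
    and alt: "(\<lambda>m. (-1) ^ m * F m) sums T"
  shows "(\<lambda>j. c j * zeta_E (real (e j)) q) sums T"
proof -
  define G where "G m j = (-1) ^ m * (c j / (real m + q) ^ (e j))" for m j
  have absG: "\<bar>G m j\<bar> = c j / (real m + q) ^ (e j)" for m j
    unfolding G_def using q c[of j] by (simp add: abs_mult power_abs)
  have "(\<lambda>j. \<Sum>m. G m j) sums (\<Sum>m. \<Sum>j. G m j)"
    by (rule fubini_sums[OF _ sF]) (simp add: absG rows)
  moreover have "(\<Sum>j. G m j) = (-1) ^ m * F m" for m
    unfolding G_def using sums_mult[OF rows[of m], of "(-1) ^ m"] by (simp add: sums_iff)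
  moreover have "(\<Sum>m. G m j) = c j * zeta_E (real (e j)) q" for j
  proof -
    have "summable (\<lambda>m. (-1) ^ m / (real m + q) ^ (e j) :: real)"
      using q e[of j] by (intro alt_summable)
    then have "(\<Sum>m. c j * ((-1) ^ m / (real m + q) ^ (e j))) = c j * (\<Sum>m. (-1) ^ m / (real m + q) ^ (e j))"
      by (rule suminf_mult)
    then show ?thesis unfolding G_def zeta_nat[OF q] by (simp add: mult_ac)
  qed
  ultimately show ?thesis using alt by (simp add: sums_iff)
qed

lemma binom_neg:
  assumes n: "n \<ge> 1" and z: "\<bar>z\<bar> < 1"
  shows "(\<lambda>j. real (n + j - 1 choose j) * z ^ j) sums (1 / (1 - z) ^ n)"
proof -
  have "\<bar>-z\<bar> < 1" using z by simp
  from gen_binomial_real[OF this, of "- real n"]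
  have "(\<lambda>j. (- real n gchoose j) * (- z) ^ j) sums (1 + - z) powr (- real n)" .
  moreover have "(- real n gchoose j) * (- z) ^ j = real (n + j - 1 choose j) * z ^ j" for j
  proof -
    have "real (n + j - 1) = real n + real j - 1" using n by (simp add: of_nat_diff)
    then have "real (n + j - 1 choose j) = (real n + real j - 1) gchoose j"
      by (metis binomial_gbinomial)
    moreover have "(-1) ^ j * (- z) ^ j = z ^ j"
      by (metis mult_minus1 power_mult_distrib minus_minus mult.commute mult_minus_left)
    ultimately show ?thesis
      by (simp add: gbinomial_minus)
  qed
  moreover have "(1 + - z) powr (- real n) = 1 / (1 - z) ^ n"
    using z by (simp add: powr_minus powr_realpow divide_inverse)
  ultimately show ?thesis by simp
qed

lemma tele:
  fixes r :: real
  assumes r: "r > 0" and n: "n \<ge> 1"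
  defines "u \<equiv> (\<lambda>m::nat. 1 / (real m + r) ^ n)"
  shows "\<And>m. u m - u (m+2) \<ge> 0"
    and "summable (\<lambda>m. u m - u (m+2))"
    and "(\<lambda>m. (-1) ^ m * (u m - u (m+2))) sums (u 0 - u 1)"
proof -
  have mono: "u m' \<le> u m" if "m \<le> m'" for m m'
    unfolding u_def using r that by (intro divide_left_mono power_mono mult_pos_pos) auto
  have pos: "u m \<ge> 0" for m unfolding u_def using r by simp
  show nn: "u m - u (m+2) \<ge> 0" for m using mono[of m "m+2"] by simp
  have ps: "(\<Sum>m<N. u m - u (m+2)) = u 0 + u 1 - u N - u (N+1)" for N
    by (induction N) (auto simp: eval_nat_numeral)
  show "summable (\<lambda>m. u m - u (m+2))"
  proof (rule summableI_nonneg_bounded[where x = "u 0 + u 1"])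
    show "0 \<le> u m - u (m+2)" for m by (rule nn)
    show "(\<Sum>m<N. u m - u (m+2)) \<le> u 0 + u 1" for N
      unfolding ps using pos[of N] pos[of "N+1"] by simp
  qed
  have s0: "(\<lambda>m. (-1) ^ m * u m) sums (\<Sum>m. (-1) ^ m * u m)"
    using alt_summable[OF r n] unfolding u_def by (simp add: summable_sums)
  have s2: "(\<lambda>m. (-1) ^ (m+2) * u (m+2)) sums ((\<Sum>m. (-1) ^ m * u m) - (\<Sum>i<2. (-1) ^ i * u i))"
    using sums_split_initial_segment[OF s0, of 2] by simp
  have "(\<lambda>m. (-1) ^ m * u m - (-1) ^ (m+2) * u (m+2)) sums (\<Sum>i<2. (-1) ^ i * u i)"
    using sums_diff[OF s0 s2] by simp
  then show "(\<lambda>m. (-1) ^ m * (u m - u (m+2))) sums (u 0 - u 1)"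
    by (simp add: eval_nat_numeral algebra_simps)
qed

lemma rows1:
  fixes x :: real
  assumes n: "n \<ge> 1" and x: "x > 2"
  shows "(\<lambda>i. real (n + i choose (i+1)) * 2 ^ (i+1) / x ^ (n+1+i)) sums (1 / (x - 2) ^ n - 1 / x ^ n)"
proof -
  have "\<bar>2/x\<bar> < 1" using x by simp
  from sums_mult2[OF binom_neg[OF n this], of "1 / x ^ n"]
  have "(\<lambda>j. real (n + j - 1 choose j) * (2/x) ^ j * (1 / x ^ n)) sums (1 / (1 - 2/x) ^ n * (1 / x ^ n))" .
  moreover have "1 / (1 - 2/x) ^ n * (1 / x ^ n) = 1 / (x - 2) ^ n"
  proof -
    have "(1 - 2/x) ^ n * x ^ n = (x - 2) ^ n"
      using x by (simp add: power_mult_distrib[symmetric] field_simps)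
    then show ?thesis using x by (simp add: field_simps)
  qed
  ultimately have s: "(\<lambda>j. real (n + j - 1 choose j) * (2/x) ^ j * (1 / x ^ n)) sums (1 / (x - 2) ^ n)" by simp
  from sums_split_initial_segment[OF s, of 1]
  have "(\<lambda>i. real (n + (i+1) - 1 choose (i+1)) * (2/x) ^ (i+1) * (1 / x ^ n)) sums (1 / (x - 2) ^ n - 1 / x ^ n)"
    by simp
  moreover have "real (n + (i+1) - 1 choose (i+1)) * (2/x) ^ (i+1) * (1 / x ^ n)
      = real (n + i choose (i+1)) * 2 ^ (i+1) / x ^ (n+1+i)" for i
    using x by (simp add: power_divide power_add field_simps)
  ultimately show ?thesis by simp
qed

lemma rows2:
  fixes x :: real
  assumes n: "n \<ge> 1" and x: "x > 1"
  shows "(\<lambda>i. 2 * real (n + 2*i choose (2*i+1)) / x ^ (n+1+2*i)) sums (1 / (x - 1) ^ n - 1 / (x + 1) ^ n)"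
proof -
  have a1: "\<bar>1/x\<bar> < 1" "\<bar>-1/x\<bar> < 1" using x by auto
  define b where "b j = real (n + j - 1 choose j)" for j
  have "(\<lambda>j. (b j * (1/x) ^ j - b j * (-1/x) ^ j) * (1 / x ^ n)) sums
         ((1 / (1 - 1/x) ^ n - 1 / (1 - -1/x) ^ n) * (1 / x ^ n))"
    unfolding b_def by (intro sums_mult2 sums_diff binom_neg n a1)
  moreover have "(1 / (1 - 1/x) ^ n - 1 / (1 - -1/x) ^ n) * (1 / x ^ n) = 1 / (x - 1) ^ n - 1 / (x + 1) ^ n"
  proof -
    have e1: "(1 - 1/x) ^ n * x ^ n = (x - 1) ^ n"
      using x by (simp add: power_mult_distrib[symmetric] field_simps)
    have e2: "(1 - -1/x) ^ n * x ^ n = (x + 1) ^ n"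
      using x by (simp add: power_mult_distrib[symmetric] field_simps)
    have "x - 1 > 0" "x + 1 > 0" "1 - 1/x > 0" "1 - -1/x > 0" using x by (auto simp: field_simps)
    then show ?thesis using x e1 e2 by (simp add: field_simps)
  qed
  ultimately have s: "(\<lambda>j. (b j * (1/x) ^ j - b j * (-1/x) ^ j) * (1 / x ^ n)) sums
         (1 / (x - 1) ^ n - 1 / (x + 1) ^ n)" by simp
  have "(\<lambda>i. (\<lambda>j. (b j * (1/x) ^ j - b j * (-1/x) ^ j) * (1 / x ^ n)) (2*i+1)) sums
         (1 / (x - 1) ^ n - 1 / (x + 1) ^ n)"
  proof (subst sums_mono_reindex)
    show "strict_mono (\<lambda>i::nat. 2*i+1)" by (auto simp: strict_mono_def)
    show "(b j * (1/x) ^ j - b j * (-1/x) ^ j) * (1 / x ^ n) = 0" if "j \<notin> range (\<lambda>i::nat. 2*i+1)" for j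
    proof -
      have "even j" using that by (metis oddE range_eqI)
      then have "(-1/x) ^ j = (1/x) ^ j" by (simp add: power_minus_even[of j] minus_divide_left[symmetric])
      then show ?thesis by simp
    qed
  qed (rule s)
  moreover have "(\<lambda>j. (b j * (1/x) ^ j - b j * (-1/x) ^ j) * (1 / x ^ n)) (2*i+1)
        = 2 * real (n + 2*i choose (2*i+1)) / x ^ (n+1+2*i)" for i
  proof -
    have "(-1/x) ^ (2*i+1) = - ((1/x) ^ (2*i+1))"
      by (simp add: minus_divide_left[symmetric] del: power_Suc)
    moreover have "b (2*i+1) = real (n + 2*i choose (2*i+1))" unfolding b_def by simp
    moreover have "x ^ n * x ^ Suc (i*2) = x ^ Suc (n + i*2)"
      by (metis power_add add_Suc_right)
    ultimately show ?thesis using x by (simp add: power_divide power_add field_simps del: power_Suc)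
  qed
  ultimately show ?thesis by simp
qed

lemma finish:
  fixes c :: "nat \<Rightarrow> real" and e :: "nat \<Rightarrow> nat" and Z :: "nat \<Rightarrow> real" and t :: "nat \<Rightarrow> real"
  assumes n: "n \<ge> 1"
    and S: "(\<lambda>j. c j * Z (e j)) sums T"
    and c0: "c 0 = 2 * real n" and e0: "e 0 = n + 1"
    and ct: "\<And>k. c (Suc k) * Z (e (Suc k)) = 2 / fact (n - 1) * t k"
    and D: "D = (-1) ^ (n+1) * fact n * Z (n+1)"
  shows "summable t \<and> D = 1/2 * (-1) ^ (n+1) * fact (n - 1) * T + (-1) ^ n * suminf t"
proof -
  define F :: real where "F = fact (n - 1)"
  have F: "F > 0" unfolding F_def by simp
  from sums_split_initial_segment[OF S, of 1]
  have "(\<lambda>i. c (i+1) * Z (e (i+1))) sums (T - c 0 * Z (e 0))"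
    by simp
  then have "(\<lambda>k. 2 / F * t k) sums (T - 2 * real n * Z (n+1))"
    using ct c0 e0 unfolding F_def by simp
  from sums_mult[OF this, of "F / 2"]
  have "(\<lambda>k. F / 2 * (2 / F * t k)) sums (F / 2 * (T - 2 * real n * Z (n+1)))" .
  moreover have "F / 2 * (2 / F * t k) = t k" for k using F by simp
  ultimately have ts: "t sums (F / 2 * (T - 2 * real n * Z (n+1)))" by simp
  have f: "fact n = real n * F"
    unfolding F_def using n by (simp add: fact_reduce)
  have m: "(-1::real) ^ (n+1) = - ((-1) ^ n)" by simp
  have "D = - ((-1) ^ n * (real n * F) * Z (n+1))" unfolding D f m by simp
  also have "\<dots> = 1/2 * (- ((-1) ^ n)) * F * T + (-1) ^ n * (F / 2 * (T - 2 * real n * Z (n+1)))"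
    by (simp add: algebra_simps)
  finally show ?thesis using ts unfolding m F_def by (simp add: sums_iff)
qed

lemma coef_aux:
  fixes A G F P Z :: real
  assumes "F \<noteq> 0" "G \<noteq> 0"
  shows "A / (G * F) * (2 * P) * Z = 2 / F * (P * A / G * Z)"
  using assms by (simp add: field_simps)

lemma coef_aux2:
  fixes A G F Z :: real
  assumes "F \<noteq> 0" "G \<noteq> 0"
  shows "2 * (A / (G * F)) * Z = 2 / F * (A / G * Z)"
  using assms by (simp add: field_simps)

theorem proposition3p20:
  fixes n :: nat
  assumes "n \<ge> 1"
  shows "(\<forall>q::real. q > 2 \<longrightarrow>
           summable (\<lambda>k. 2 ^ (k+1) * fact (n + k + 1) / fact (k + 2)
                           * zeta_E (real (n + k + 2)) q)
         \<and> (deriv ^^ n) psi_tilde q =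
             1/2 * (-1) ^ (n+1) * fact (n - 1) * (1 / (q - 2) ^ n - 1 / (q - 1) ^ n)
             + (-1) ^ n * (\<Sum>k. 2 ^ (k+1) * fact (n + k + 1) / fact (k + 2)
                           * zeta_E (real (n + k + 2)) q))
    \<and> (\<forall>q::real. q > 1 \<longrightarrow>
           summable (\<lambda>k. fact (n + 2 * (k+1)) / fact (2 * (k+1) + 1)
                           * zeta_E (real (n + 2 * (k+1) + 1)) q)
         \<and> (deriv ^^ n) psi_tilde q =
             1/2 * (-1) ^ (n+1) * fact (n - 1) * (1 / (q - 1) ^ n - 1 / q ^ n)
             + (-1) ^ n * (\<Sum>k. fact (n + 2 * (k+1)) / fact (2 * (k+1) + 1)
                           * zeta_E (real (n + 2 * (k+1) + 1)) q))"
proof (intro conjI allI impI)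
  note n = assms
  fix q :: real assume q: "q > 2"
  define u where "u = (\<lambda>m::nat. 1 / (real m + (q - 2)) ^ n)"
  have r: "q - 2 > 0" using q by simp
  have main: "(\<lambda>j. (real (n + j choose (j+1)) * 2 ^ (j+1)) * zeta_E (real (n+1+j)) q) sums (u 0 - u 1)"
  proof (rule main_gen[where F = "\<lambda>m. u m - u (m+2)"])
    show "q > 0" using q by simp
    show "n + 1 + j \<ge> 1" for j by simp
    show "0 \<le> real (n + j choose (j+1)) * 2 ^ (j+1)" for j by simp
    show "(\<lambda>j. real (n + j choose (j+1)) * 2 ^ (j+1) / (real m + q) ^ (n+1+j)) sums (u m - u (m+2))" for m
    proof -
      have "real m + q > 2" using q by simp
      from rows1[OF n this]
      show ?thesis unfolding u_def by (simp add: algebra_simps)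
    qed
    show "summable (\<lambda>m. u m - u (m+2))" unfolding u_def by (rule tele(2)[OF r n])
    show "(\<lambda>m. (-1) ^ m * (u m - u (m+2))) sums (u 0 - u 1)" unfolding u_def by (rule tele(3)[OF r n])
  qed
  have uu: "u 0 - u 1 = 1 / (q - 2) ^ n - 1 / (q - 1) ^ n" unfolding u_def by simp
  have "summable (\<lambda>k. 2 ^ (k+1) * fact (n + k + 1) / fact (k + 2) * zeta_E (real (n + k + 2)) q)
    \<and> (deriv ^^ n) psi_tilde q = 1/2 * (-1) ^ (n+1) * fact (n - 1) * (u 0 - u 1)
      + (-1) ^ n * (\<Sum>k. 2 ^ (k+1) * fact (n + k + 1) / fact (k + 2) * zeta_E (real (n + k + 2)) q)"
  proof (rule finish[where Z = "\<lambda>j. zeta_E (real j) q" and e = "\<lambda>j. n+1+j"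
      and c = "\<lambda>j. real (n + j choose (j+1)) * 2 ^ (j+1)", OF n main])
    show "real (n + 0 choose (0+1)) * 2 ^ (0+1) = 2 * real n" by simp
    show "n + 1 + 0 = n + 1" by simp
    show "real (n + Suc k choose (Suc k + 1)) * 2 ^ (Suc k + 1) * zeta_E (real (n + 1 + Suc k)) q =
      2 / fact (n - 1) * (2 ^ (k+1) * fact (n + k + 1) / fact (k + 2) * zeta_E (real (n + k + 2)) q)" for k
    proof -
      have "real (n + Suc k choose (Suc k + 1)) = fact (n + Suc k) / (fact (Suc k + 1) * fact (n + Suc k - (Suc k + 1)))"
        using n by (intro binomial_fact) simp
      moreover have "n + Suc k - (Suc k + 1) = n - 1" using n by simp
      moreover have "n + 1 + Suc k = n + k + 2" "n + Suc k = n + k + 1" "Suc k + 1 = k + 2" by simp_all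
      moreover have "(2::real) ^ (k + 2) = 2 * 2 ^ (k+1)" by simp
      ultimately show ?thesis
        by (simp only:) (rule coef_aux, simp_all)
    qed
    show "(deriv ^^ n) psi_tilde q = (-1) ^ (n+1) * fact n * zeta_E (real (n+1)) q"
      using psi_derivs[of n] q by simp
  qed
  then show "summable (\<lambda>k. 2 ^ (k+1) * fact (n + k + 1) / fact (k + 2) * zeta_E (real (n + k + 2)) q)"
    "(deriv ^^ n) psi_tilde q =
             1/2 * (-1) ^ (n+1) * fact (n - 1) * (1 / (q - 2) ^ n - 1 / (q - 1) ^ n)
             + (-1) ^ n * (\<Sum>k. 2 ^ (k+1) * fact (n + k + 1) / fact (k + 2)
                           * zeta_E (real (n + k + 2)) q)"
    unfolding uu by auto
next
  note n = assms
  fix q :: real assume q: "q > 1"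
  define u where "u = (\<lambda>m::nat. 1 / (real m + (q - 1)) ^ n)"
  have r: "q - 1 > 0" using q by simp
  have main: "(\<lambda>j. (2 * real (n + 2*j choose (2*j+1))) * zeta_E (real (n+1+2*j)) q) sums (u 0 - u 1)"
  proof (rule main_gen[where F = "\<lambda>m. u m - u (m+2)"])
    show "q > 0" using q by simp
    show "n + 1 + 2*j \<ge> 1" for j by simp
    show "0 \<le> 2 * real (n + 2*j choose (2*j+1))" for j by simp
    show "(\<lambda>j. 2 * real (n + 2*j choose (2*j+1)) / (real m + q) ^ (n+1+2*j)) sums (u m - u (m+2))" for m
    proof -
      have "real m + q > 1" using q by simp
      from rows2[OF n this]
      show ?thesis unfolding u_def by (simp add: algebra_simps)
    qed
    show "summable (\<lambda>m. u m - u (m+2))" unfolding u_def by (rule tele(2)[OF r n])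
    show "(\<lambda>m. (-1) ^ m * (u m - u (m+2))) sums (u 0 - u 1)" unfolding u_def by (rule tele(3)[OF r n])
  qed
  have uu: "u 0 - u 1 = 1 / (q - 1) ^ n - 1 / q ^ n" unfolding u_def by simp
  have "summable (\<lambda>k. fact (n + 2 * (k+1)) / fact (2 * (k+1) + 1) * zeta_E (real (n + 2 * (k+1) + 1)) q)
    \<and> (deriv ^^ n) psi_tilde q = 1/2 * (-1) ^ (n+1) * fact (n - 1) * (u 0 - u 1)
      + (-1) ^ n * (\<Sum>k. fact (n + 2 * (k+1)) / fact (2 * (k+1) + 1) * zeta_E (real (n + 2 * (k+1) + 1)) q)"
  proof (rule finish[where Z = "\<lambda>j. zeta_E (real j) q" and e = "\<lambda>j. n+1+2*j"
      and c = "\<lambda>j. 2 * real (n + 2*j choose (2*j+1))", OF n main])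
    show "2 * real (n + 2*0 choose (2*0+1)) = 2 * real n" by simp
    show "n + 1 + 2*0 = n + 1" by simp
    show "2 * real (n + 2 * Suc k choose (2 * Suc k + 1)) * zeta_E (real (n + 1 + 2 * Suc k)) q =
      2 / fact (n - 1) * (fact (n + 2 * (k+1)) / fact (2 * (k+1) + 1) * zeta_E (real (n + 2 * (k+1) + 1)) q)" for k
    proof -
      have "real (n + 2 * Suc k choose (2 * Suc k + 1)) = fact (n + 2 * Suc k) / (fact (2 * Suc k + 1) * fact (n + 2 * Suc k - (2 * Suc k + 1)))"
        using n by (intro binomial_fact) simp
      moreover have "n + 2 * Suc k - (2 * Suc k + 1) = n - 1" using n by simp
      moreover have "n + 1 + 2 * Suc k = n + 2 * (k+1) + 1" by simp
      moreover have "2 * Suc k = 2 * (k+1)" by simp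
      ultimately show ?thesis
        by (simp only:) (rule coef_aux2, simp_all)
    qed
    show "(deriv ^^ n) psi_tilde q = (-1) ^ (n+1) * fact n * zeta_E (real (n+1)) q"
      using psi_derivs[of n] q by simp
  qed
  then show "summable (\<lambda>k. fact (n + 2 * (k+1)) / fact (2 * (k+1) + 1) * zeta_E (real (n + 2 * (k+1) + 1)) q)"
    "(deriv ^^ n) psi_tilde q =
             1/2 * (-1) ^ (n+1) * fact (n - 1) * (1 / (q - 1) ^ n - 1 / q ^ n)
             + (-1) ^ n * (\<Sum>k. fact (n + 2 * (k+1)) / fact (2 * (k+1) + 1)
                           * zeta_E (real (n + 2 * (k+1) + 1)) q)"
    unfolding uu by auto
qed

end
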